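(* Let $q$ be a prime power and let $n\ge 3$ be an odd integer. Let $d\in D_n$, let $\beta$ be a primitive $d$-th root of unity over $\mathbb{F}_{q^2}$, and let $f_\beta(x)=\prod_{i=0}^{n-1}(x-\beta^{q^{2i}})$. Then $f_\beta(x)$ is a SCRIM polynomial over $\mathbb{F}_{q^2}$ of degree $n$ and order $d$.
   Context: $D_n$ denotes the set of all positive divisors of $q^n+1$ that do not divide $q^k+1$ for any integer $0\le k<n$. For $f(x)\in\mathbb{F}_{q^2}[x]$ of degree $m$ with $f(0)\neq0$, the reciprocal is $f^*(x)=x^m f(0)^{-1}f(1/x)$, the conjugate of $g(x)=\sum g_ix^i$ is $\overline{g(x)}=\sum g_i^q x^i$, and the conjugate-reciprocal is $f^\dagger(x)=\overline{f^*(x)}$. A polynomial $f$ with $f(0)\ne 0$ is SCRIM if $f=f^\dagger$ and $f$ is irreducible and monic. The order of $f$ is the smallest positive integer $s$ such that $f(x)$ divides $x^s-1$. *)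

theory Defs
  imports "HOL-Computational_Algebra.Computational_Algebra"
begin

definition D_set :: "nat \<Rightarrow> nat \<Rightarrow> nat set" where
  "D_set q n = {d. 0 < d \<and> d dvd q ^ n + 1 \<and> (\<forall>k<n. \<not> d dvd q ^ k + 1)}"

definition recip_poly :: "'a::field poly \<Rightarrow> 'a poly" where
  "recip_poly f = smult (inverse (coeff f 0)) (reflect_poly f)"

definition conj_poly :: "nat \<Rightarrow> 'a::field poly \<Rightarrow> 'a poly" where
  "conj_poly q g = map_poly (\<lambda>c. c ^ q) g"

definition conj_recip :: "nat \<Rightarrow> 'a::field poly \<Rightarrow> 'a poly" where
  "conj_recip q f = conj_poly q (recip_poly f)"

text \<open>SCRIM over F_{q^2} (the coefficient field 'a).\<close>
definition SCRIM :: "nat \<Rightarrow> 'a::field poly \<Rightarrow> bool" where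
  "SCRIM q f \<longleftrightarrow> coeff f 0 \<noteq> 0 \<and> f = conj_recip q f \<and> irreducible f \<and> lead_coeff f = 1"

definition poly_ord :: "'a::field poly \<Rightarrow> nat" where
  "poly_ord f = (LEAST s. 0 < s \<and> f dvd (monom 1 s - 1))"

definition primitive_root :: "nat \<Rightarrow> 'b::field \<Rightarrow> bool" where
  "primitive_root d b \<longleftrightarrow> 0 < d \<and> b ^ d = 1 \<and> (\<forall>j. 0 < j \<and> j < d \<longrightarrow> b ^ j \<noteq> 1)"

end

theory Submission imports Defs "HOL-Number_Theory.Pocklington" "Berlekamp_Zassenhaus.Finite_Field" begin

lemma D_coprime:
  fixes q n d :: nat
  assumes "d dvd q ^ n + 1" "0 < n"
  shows "coprime d q"
proof -
  have "coprime (q ^ n + 1) q"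
    using assms(2) by (metis coprime_add_one_left coprime_power_right_iff order.strict_iff_not)
  then show ?thesis using assms(1) by (metis coprime_divisors gcd_nat.refl)
qed

lemma nt_main:
  fixes q n d m :: nat
  assumes D: "d \<in> D_set q n" and odd: "odd n" and m: "0 < m" "m < n"
    and dv: "d dvd (q^2)^m - 1"
  shows False
proof -
  have d1: "d dvd q ^ n + 1" and d2: "\<And>k. k < n \<Longrightarrow> \<not> d dvd q ^ k + 1"
    using D by (auto simp: D_set_def)
  have n0: "0 < n" using m by simp
  have cop: "coprime d q" using D_coprime[OF d1 n0] .
  hence copQ: "coprime d (q^2)" by simp
  have q0: "q > 0"
  proof (rule ccontr)
    assume "\<not> q > 0"
    then have "d = 1" using cop by simp
    then show False using d2[of 0] n0 by simp
  qed
  have qn1: "q ^ n \<ge> 1" using q0 by simp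
  have "(q^2)^n - 1 = (q^n + 1) * (q^n - 1)"
  proof -
    have "(q^2)^n = q^n * q^n" by (metis power_mult mult.commute power2_eq_square)
    moreover have "\<And>x::nat. x * x - 1 = (x + 1) * (x - 1)"
      by (case_tac x) auto
    ultimately show ?thesis by simp
  qed
  hence "d dvd (q^2)^n - 1" using d1 by (metis dvd_mult2)
  hence cn: "[(q^2)^n = 1] (mod d)"
    using cong_altdef_nat[of 1 "(q^2)^n" d] q0 by simp
  have "(q^2)^m \<ge> 1" using q0 by simp
  hence cm: "[(q^2)^m = 1] (mod d)" using dv cong_altdef_nat by blast
  define s where "s = ord d (q^2)"
  have s0: "0 < s" using copQ s_def by (simp add: coprime_commute)
  have sn: "s dvd n" using cn ord_divides s_def by blast
  have sm: "s dvd m" using cm ord_divides s_def by blast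
  have "s \<le> m" by (rule dvd_imp_le[OF sm m(1)])
  hence sltn: "s < n" using m by linarith
  obtain r where r: "n = s * r" using sn by blast
  have oddr: "odd r" using odd r by simp
  then obtain t where t: "r = 2 * t + 1" by (metis oddE)
  have cs: "[(q^2)^s = 1] (mod d)" using ord s_def by blast
  have e1: "((q^2)^s)^t = q^(2*s*t)" by (simp only: power_mult)
  have "n = s + 2*s*t" using r t by simp
  hence "q ^ n = q ^ s * q^(2*s*t)" by (simp add: power_add)
  hence "q ^ n = q ^ s * ((q^2)^s)^t" using e1 by simp
  moreover have "[q ^ s * ((q^2)^s)^t = q ^ s * 1 ^ t] (mod d)"
    using cs by (intro cong_mult cong_pow cong_refl)
  ultimately have "[q ^ n = q ^ s] (mod d)" by simp
  hence "[q ^ n + 1 = q ^ s + 1] (mod d)" by (intro cong_add cong_refl)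
  moreover have "[q ^ n + 1 = 0] (mod d)" using d1 by (simp add: cong_0_iff)
  ultimately have "[q ^ s + 1 = 0] (mod d)" by (meson cong_sym cong_trans)
  hence "d dvd q ^ s + 1" by (simp add: cong_0_iff)
  with d2[OF sltn] show False by simp
qed
lemma frob_field_hom:
  assumes "prime CHAR('b::field)" "m = CHAR('b) ^ e"
  shows "field_hom (\<lambda>x::'b. x ^ m)"
  apply unfold_locales
  using assms by (auto simp: power_mult_distrib freshmans_dream' prime_gt_0_nat)

lemma emb_field_hom:
  fixes emb :: "'a::field \<Rightarrow> 'b::field"
  assumes "emb 1 = 1" and "\<And>x y. emb (x + y) = emb x + emb y"
    and "\<And>x y. emb (x * y) = emb x * emb y"
  shows "field_hom emb"
proof -
  have "emb 0 = 0" using assms(2)[of 0 0] by (metis add.right_neutral add_left_cancel)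
  then show ?thesis apply unfold_locales using assms by auto
qed

lemma map_prod_linear:
  assumes "field_hom phi"
  shows "map_poly phi (\<Prod>x\<in>S. [:-x,1:]) = (\<Prod>x\<in>S. [:-phi x,1:])"
proof -
  interpret field_hom phi by fact
  interpret m: map_poly_idom_hom phi ..
  show ?thesis by (simp add: m.hom_prod hom_distribs)
qed

lemma prod_linear_dvd:
  fixes S :: "'b::field set"
  assumes "finite S" "\<forall>x\<in>S. poly P x = 0"
  shows "(\<Prod>x\<in>S. [:-x,1:]) dvd P"
  using assms
proof (induction S arbitrary: P rule: finite_induct)
  case empty
  then show ?case by simp
next
  case (insert a S)
  have "[:-a,1:] dvd P" using insert.prems by (simp add: dvd_iff_poly_eq_0)
  then obtain P1 where P1: "P = [:-a,1:] * P1" by blast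
  have "\<forall>x\<in>S. poly P1 x = 0"
  proof
    fix x assume "x \<in> S"
    hence "x \<noteq> a" "poly P x = 0" using insert by auto
    thus "poly P1 x = 0" using P1 by simp
  qed
  hence "(\<Prod>x\<in>S. [:-x,1:]) dvd P1" using insert.IH by blast
  moreover have "(\<Prod>x\<in>insert a S. [:-x,1:]) = [:-a,1:] * (\<Prod>x\<in>S. [:-x,1:])"
    using insert.hyps by simp
  ultimately show ?case unfolding P1 by (simp only: mult_dvd_mono[OF dvd_refl])
qed

lemma ff_pow_card:
  fixes x :: "'a :: {field,finite}"
  shows   "x ^ card (UNIV :: 'a set) = x"
proof (cases "x = 0")
  case False
  have "x * (\<Prod>y\<in>UNIV-{0}. x * y) = x * x ^ (card (UNIV :: 'a set) - 1) * \<Prod>(UNIV-{0})"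
    by (simp add: prod.distrib mult_ac)
  also have "x * x ^ (card (UNIV :: 'a set) - 1) = x ^ Suc (card (UNIV :: 'a set) - 1)"
    by (subst power_Suc) auto
  also have "Suc (card (UNIV :: 'a set) - 1) = card (UNIV :: 'a set)"
    using finite_UNIV_card_ge_0[where ?'a = 'a] by simp
  also have "(\<Prod>y\<in>UNIV-{0}. x * y) = (\<Prod>y\<in>UNIV-{0}. y)"
    by (rule prod.reindex_bij_witness[of _ "\<lambda>y. y / x" "\<lambda>y. x * y"]) (use False in auto)
  finally show ?thesis
    by simp
qed (use finite_UNIV_card_ge_0[where ?'a = 'a] in auto)

lemma prim_pow_eq1:
  assumes "primitive_root d (b::'b::field)"
  shows "b ^ a = 1 \<longleftrightarrow> d dvd a"
proof -
  have d0: "0 < d" and bd: "b ^ d = 1" and mn: "\<And>j. 0 < j \<Longrightarrow> j < d \<Longrightarrow> b ^ j \<noteq> 1"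
    using assms by (auto simp: primitive_root_def)
  have "b ^ a = (b ^ d) ^ (a div d) * b ^ (a mod d)"
  proof -
    have "b ^ a = b ^ (d * (a div d) + a mod d)" by simp
    thus ?thesis by (simp only: power_add power_mult)
  qed
  hence "b ^ a = b ^ (a mod d)" using bd by simp
  moreover have "b ^ (a mod d) = 1 \<longleftrightarrow> a mod d = 0"
    using mn[of "a mod d"] d0 by (cases "a mod d = 0") auto
  ultimately show ?thesis by (simp add: dvd_eq_mod_eq_0)
qed

lemma prim_pow_eq:
  assumes "primitive_root d (b::'b::field)" "a \<le> c"
  shows "b ^ a = b ^ c \<longleftrightarrow> d dvd c - a"
proof -
  have "b \<noteq> 0" using assms(1) by (auto simp: primitive_root_def power_0_left)
  have "b ^ c = b ^ a * b ^ (c - a)" using assms(2) by (simp flip: power_add)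
  hence "b ^ a = b ^ c \<longleftrightarrow> b ^ (c - a) = 1" using \<open>b \<noteq> 0\<close> by auto
  thus ?thesis using prim_pow_eq1[OF assms(1)] by simp
qed

lemma reflect_linear: "reflect_poly [:a::'a::field, 1:] = [:1, a:]"
  by (simp add: reflect_poly_def cCons_def)


theorem mainTheorem8:
  fixes emb :: "'a::{field,finite} \<Rightarrow> 'b::field"
    and q n d p k :: nat and \<beta> :: 'b
  assumes "prime p" and "0 < k" and "q = p ^ k"
    and "card (UNIV :: 'a set) = q ^ 2"
    and "emb 1 = 1" and "\<And>x y. emb (x + y) = emb x + emb y"
    and "\<And>x y. emb (x * y) = emb x * emb y"
    and "odd n" and "3 \<le> n"
    and "d \<in> D_set q n"
    and "primitive_root d \<beta>"
  shows "\<exists>g :: 'a poly.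
           map_poly emb g = (\<Prod>i<n. [:- (\<beta> ^ (q ^ (2 * i))), 1:])
         \<and> SCRIM q g \<and> degree g = n \<and> poly_ord g = d"
proof -
  interpret e: field_hom emb by (rule emb_field_hom) (fact assms)+
  interpret me: map_poly_inj_idom_hom emb ..
  define Q where "Q = q^2"
  have p: "prime p" by fact
  have cardA: "card (UNIV :: 'a set) = p ^ (2*k)"
    using assms(3,4) by (simp add: power_mult mult.commute)
  have charA: "CHAR('a) = p"
  proof -
    have pc: "prime CHAR('a)" by (rule prime_CHAR_semidom) (rule finite_imp_CHAR_pos, simp)
    moreover have "CHAR('a) dvd p ^ (2*k)" using CHAR_dvd_CARD[where 'a='a] cardA by simp
    hence "CHAR('a) dvd p" using pc prime_dvd_power by blast
    ultimately show ?thesis using p primes_dvd_imp_eq by blast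
  qed
  have charB: "CHAR('b) = p"
  proof (rule CHAR_eqI)
    have "emb (of_nat p) = of_nat p" by (rule e.hom_of_nat)
    moreover have "of_nat p = (0::'a)" using charA by (metis of_nat_CHAR)
    ultimately show "of_nat p = (0::'b)" by simp
  next
    fix x assume "of_nat x = (0::'b)"
    hence "emb (of_nat x) = 0" by (simp add: e.hom_of_nat)
    hence "of_nat x = (0::'a)" by simp
    thus "p dvd x" using charA of_nat_eq_0_iff_char_dvd by metis
  qed
  have fq: "field_hom (\<lambda>x::'b. x ^ q)"
    by (rule frob_field_hom[where e=k]) (use charB p assms(3) in auto)
  have fQ: "field_hom (\<lambda>x::'b. x ^ Q)"
    by (rule frob_field_hom[where e="2*k"]) (use charB p assms(3) Q_def in \<open>auto simp: power_mult mult.commute\<close>)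
  have powA: "\<And>x::'a. x ^ Q = x" using ff_pow_card assms(4) Q_def by metis
  have q2: "q \<ge> 2" using assms(2,3) p
    by (metis One_nat_def Suc_1 Suc_leI le_trans not_less not_one_le_zero one_less_power prime_gt_1_nat zero_less_one)
  have Q2: "Q \<ge> 2"
  proof -
    have "2*2 \<le> q*q" by (rule mult_le_mono[OF q2 q2])
    thus ?thesis unfolding Q_def power2_eq_square by linarith
  qed
  have d1: "d dvd q ^ n + 1" and d0: "0 < d" using assms(10) by (auto simp: D_set_def)
  have n0: "0 < n" using assms(9) by simp
  have copq: "coprime d q" using D_coprime[OF d1 n0] .
  have b0: "\<beta> \<noteq> 0" using assms(11) by (auto simp: primitive_root_def power_0_left)
  have bqn: "\<beta> ^ (q^n) * \<beta> = 1"
    using prim_pow_eq1[OF assms(11), of "q^n+1"] d1 by (simp add: mult.commute)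
  have inv_b: "inverse \<beta> = \<beta> ^ (q^n)" using bqn b0 by (metis inverse_unique mult.commute)
  have qn1: "q ^ n \<ge> 1" using q2 by simp
  have Qn: "Q ^ n = (q^n + 1) * (q^n - 1) + 1"
  proof -
    have "Q ^ n = q^n * q^n" unfolding Q_def by (metis power_mult mult.commute power2_eq_square)
    moreover have "\<And>x::nat. x \<ge> 1 \<Longrightarrow> x * x = (x + 1) * (x - 1) + 1"
      by (case_tac x) auto
    ultimately show ?thesis using qn1 by simp
  qed
  have bQn: "\<beta> ^ (Q ^ n) = \<beta>"
  proof -
    have "\<beta> ^ (Q ^ n) = (\<beta> ^ (q^n + 1)) ^ (q^n - 1) * \<beta>"
      unfolding Qn by (simp only: power_add power_mult power_one_right)
    also have "\<beta> ^ (q^n + 1) = 1" using bqn by (simp add: mult.commute)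
    finally show ?thesis by simp
  qed
  define r where "r i = \<beta> ^ (Q ^ i)" for i
  have r_per: "r (i + n) = r i" for i
  proof -
    have "r (i + n) = (\<beta> ^ (Q ^ n)) ^ (Q ^ i)" unfolding r_def
      by (simp add: power_add flip: power_mult) (simp add: mult.commute)
    thus ?thesis using bQn r_def by simp
  qed
  have r_per2: "r (j + m * n) = r j" for j m
    by (induction m) (simp_all, metis r_per add.assoc add.commute)
  have r_mod: "r i = r (i mod n)" for i
    using r_per2[of "i mod n" "i div n"] by simp
  have r_Suc: "r i ^ Q = r (Suc i)" for i
    unfolding r_def by (simp add: power_mult[symmetric] mult.commute)
  have r_inv: "(inverse (r i)) ^ q = r (i + (n+1) div 2)" for i
  proof -
    have h: "Q ^ ((n+1) div 2) = q ^ n * q"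
    proof -
      have "2 * ((n+1) div 2) = n + 1" using assms(8) by simp
      hence "Q ^ ((n+1) div 2) = q ^ (n+1)" unfolding Q_def by (metis power_mult)
      thus ?thesis by simp
    qed
    have "inverse (r i) = (inverse \<beta>) ^ (Q^i)" unfolding r_def by (simp add: power_inverse)
    also have "\<dots> = \<beta> ^ (q^n * Q^i)" by (simp add: inv_b power_mult)
    finally have "(inverse (r i)) ^ q = \<beta> ^ (q ^ n * Q ^ i * q)" by (simp add: power_mult)
    also have "\<dots> = r (i + (n+1) div 2)" unfolding r_def power_add h by (simp add: mult_ac)
    finally show ?thesis .
  qed
  have r_inj: "inj_on r {..<n}"
  proof (rule inj_onI, rule ccontr)
    have main: False if ij: "i < j" "j < n" "r i = r j" for i j
    proof -
      have le: "Q ^ i \<le> Q ^ j" using ij Q2 by (simp add: power_increasing)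
      have "d dvd Q ^ j - Q ^ i" using prim_pow_eq[OF assms(11) le] ij r_def by simp
      moreover have "Q ^ j - Q ^ i = Q ^ i * (Q ^ (j - i) - 1)"
        using ij by (simp add: diff_mult_distrib2 flip: power_add)
      moreover have "coprime d (Q ^ i)" using copq Q_def by simp
      ultimately have "d dvd Q ^ (j - i) - 1" by (metis coprime_dvd_mult_right_iff)
      hence dvq: "d dvd (q^2)^(j-i) - 1" using Q_def by simp
      show False by (rule nt_main[OF assms(10) assms(8) _ _ dvq]) (use ij in auto)
    qed
    fix i j assume "i \<in> {..<n}" "j \<in> {..<n}" "r i = r j" "i \<noteq> j"
    thus False using main[of i j] main[of j i] by (cases "i < j") auto
  qed
  define S where "S = r ` {..<n}"
  have finS: "finite S" unfolding S_def by simp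
  have cardS: "card S = n" unfolding S_def using r_inj by (simp add: card_image)
  have rS: "r i \<in> S" for i unfolding S_def using r_mod[of i] n0 by auto
  have S_nz: "x \<noteq> 0" if "x \<in> S" for x using that b0 unfolding S_def r_def by auto
  define G where "G = (\<Prod>x\<in>S. [:-x,1:])"
  have Geq: "(\<Prod>i<n. [:- (\<beta> ^ (q ^ (2 * i))), 1:]) = G"
  proof -
    have "(\<Prod>i<n. [:- (\<beta> ^ (q ^ (2 * i))), 1:]) = (\<Prod>i<n. [:- r i, 1:])"
      unfolding r_def Q_def by (simp add: power_mult)
    also have "\<dots> = G" unfolding G_def S_def using prod.reindex[OF r_inj, of "\<lambda>x. [:-x,1:]"] by simp
    finally show ?thesis .
  qed
  interpret fQ: field_hom "\<lambda>x::'b. x ^ Q" by (rule fQ)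
  interpret fq: field_hom "\<lambda>x::'b. x ^ q" by (rule fq)
  have injQ: "inj (\<lambda>x::'b. x ^ Q)" by (rule fQ.inj_f)
  have injq: "inj (\<lambda>x::'b. x ^ q)" by (rule fq.inj_f)
  have S_frob: "(\<lambda>x. x ^ Q) ` S = S"
  proof (rule card_subset_eq[OF finS])
    show "(\<lambda>x. x ^ Q) ` S \<subseteq> S"
    proof
      fix y assume "y \<in> (\<lambda>x. x ^ Q) ` S"
      then obtain i where "y = r i ^ Q" unfolding S_def by auto
      thus "y \<in> S" using r_Suc rS by simp
    qed
    show "card ((\<lambda>x. x ^ Q) ` S) = card S"
      by (rule card_image) (rule inj_on_subset[OF injQ], simp)
  qed
  define h where "h x = (inverse x) ^ q" for x :: 'b
  have inj_h: "inj h"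
  proof (rule injI)
    fix x y assume "h x = h y"
    hence "inverse x = inverse y" unfolding h_def using injq by (auto dest: injD)
    thus "x = y" by simp
  qed
  have S_h: "h ` S = S"
  proof (rule card_subset_eq[OF finS])
    show "h ` S \<subseteq> S"
    proof
      fix y assume "y \<in> h ` S"
      then obtain i where "y = h (r i)" unfolding S_def by auto
      thus "y \<in> S" using r_inv rS h_def by simp
    qed
    show "card (h ` S) = card S"
      by (rule card_image) (rule inj_on_subset[OF inj_h], simp)
  qed
  have GQ: "map_poly (\<lambda>x. x ^ Q) G = G"
  proof -
    have "map_poly (\<lambda>x. x ^ Q) G = (\<Prod>x\<in>S. [:-(x ^ Q),1:])"
      unfolding G_def by (rule map_prod_linear[OF fQ])
    also have "\<dots> = (\<Prod>y\<in>(\<lambda>x. x ^ Q) ` S. [:-y,1:])"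
      by (rule prod.reindex[symmetric, unfolded comp_def]) (rule inj_on_subset[OF injQ], simp)
    also have "\<dots> = G" unfolding S_frob G_def ..
    finally show ?thesis .
  qed
  have fixed_range: "{x::'b. x ^ Q = x} = range emb"
  proof -
    define P :: "'b poly" where "P = Polynomial.monom 1 Q + [:0,-1:]"
    have degP: "degree P = Q" unfolding P_def using Q2
      by (subst degree_add_eq_left) (auto simp: degree_monom_eq)
    hence P0: "P \<noteq> 0" using Q2 by auto
    have Peq: "{x::'b. x ^ Q = x} = {x. poly P x = 0}" unfolding P_def by (auto simp: poly_monom)
    have fin: "finite {x::'b. x ^ Q = x}" unfolding Peq by (rule poly_roots_finite[OF P0])
    have card_le: "card {x::'b. x ^ Q = x} \<le> Q" unfolding Peq using card_poly_roots_bound[OF P0] degP by simp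
    have sub: "range emb \<subseteq> {x::'b. x ^ Q = x}"
      using powA by (auto simp flip: e.hom_power)
    have "card (range emb) = Q" using card_image[OF e.inj_f] assms(4) Q_def by simp
    hence "card {x::'b. x ^ Q = x} \<le> card (range emb)" using card_le by simp
    moreover have "card (range emb) \<le> card {x::'b. x ^ Q = x}" by (rule card_mono[OF fin sub])
    ultimately have "card (range emb) = card {x::'b. x ^ Q = x}" by (rule le_antisym[rotated])
    hence "range emb = {x::'b. x ^ Q = x}" by (rule card_subset_eq[OF fin sub])
    thus ?thesis by (rule sym)
  qed
  have coefG: "Polynomial.coeff G i \<in> range emb" for i
  proof -
    have "Polynomial.coeff G i ^ Q = Polynomial.coeff G i"
      using arg_cong[OF GQ, of "\<lambda>P. Polynomial.coeff P i"] by (simp add: coeff_map_poly)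
    thus ?thesis using fixed_range by blast
  qed
  define g where "g = map_poly (inv_into UNIV emb) G"
  have inv0: "inv_into UNIV emb 0 = 0" using inv_into_f_f[OF e.inj_f, of 0] by simp
  have mg: "map_poly emb g = G"
    unfolding g_def
    by (rule poly_eqI) (simp add: coeff_map_poly inv0 f_inv_into_f[OF coefG])
  interpret mfq: map_poly_idom_hom "\<lambda>x::'b. x ^ q" ..
  have r0: "r 0 = \<beta>" unfolding r_def by simp
  have bS: "\<beta> \<in> S" using rS[of 0] r0 by simp
  have G0: "G \<noteq> 0" unfolding G_def using finS by (simp add: prod_zero_iff)
  have rootG: "poly G x = 0" if "x \<in> S" for x
    unfolding G_def using that finS by (simp add: poly_prod prod_zero_iff)
  have degG: "degree G = n"
  proof -
    have "degree G = (\<Sum>x\<in>S. degree [:-x,1:])"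
      unfolding G_def by (rule degree_prod_eq_sum_degree) auto
    also have "\<dots> = card S" by simp
    finally show ?thesis using cardS by simp
  qed
  have lcG: "lead_coeff G = 1" unfolding G_def by (simp add: lead_coeff_prod)
  have degg: "degree g = n" using degG mg by (metis e.degree_map_poly_hom)
  have lcg: "lead_coeff g = 1" using lcG mg by (metis e.hom_lead_coeff e.hom_1_iff)
  have cG0: "Polynomial.coeff G 0 = (\<Prod>x\<in>S. - x)"
    unfolding poly_0_coeff_0[symmetric] G_def by (simp add: poly_prod)
  have cG0nz: "Polynomial.coeff G 0 \<noteq> 0" unfolding cG0 using finS S_nz by (simp add: prod_zero_iff)
  have cg0: "Polynomial.coeff g 0 \<noteq> 0"
  proof
    assume "Polynomial.coeff g 0 = 0"
    hence "Polynomial.coeff (map_poly emb g) 0 = 0" by simp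
    thus False using mg cG0nz by simp
  qed
  have g0: "g \<noteq> 0" using degg assms(9) by auto
  have rootdeg: "degree a \<ge> n" if a0: "a \<noteq> 0" and ra: "poly (map_poly emb a) \<beta> = 0" for a
  proof -
    let ?A = "map_poly emb a"
    have AQ: "map_poly (\<lambda>x. x^Q) ?A = ?A"
      by (rule poly_eqI) (simp add: coeff_map_poly powA flip: e.hom_power)
    have step: "poly ?A (x^Q) = (poly ?A x)^Q" for x
      using fQ.poly_map_poly[of ?A x] AQ by simp
    have ri: "poly ?A (r i) = 0" for i
    proof (induction i)
      case 0 then show ?case using r0 ra by simp
    next
      case (Suc i) then show ?case using step[of "r i"] r_Suc[of i] Q2 by simp
    qed
    have A0: "?A \<noteq> 0" using a0 by simp
    have "S \<subseteq> {x. poly ?A x = 0}" unfolding S_def using ri by auto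
    hence "card S \<le> card {x. poly ?A x = 0}" by (rule card_mono[OF poly_roots_finite[OF A0]])
    also have "\<dots> \<le> degree ?A" by (rule card_poly_roots_bound[OF A0])
    finally show ?thesis using cardS by simp
  qed
  have irr: "irreducible g"
  proof (rule irreducibleI)
    show "g \<noteq> 0" by fact
    show "\<not> g dvd 1" using is_unit_iff_degree[OF g0] degg assms(9) by simp
    fix a b assume gab: "g = a * b"
    hence a0: "a \<noteq> 0" and b0': "b \<noteq> 0" using g0 by auto
    have dsum: "degree a + degree b = n" using gab degg a0 b0' by (simp add: degree_mult_eq)
    have "poly (map_poly emb a) \<beta> * poly (map_poly emb b) \<beta> = 0"
    proof -
      have "map_poly emb a * map_poly emb b = G" using mg gab by (simp add: me.hom_mult)
      thus ?thesis using rootG[OF bS] by (metis poly_mult)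
    qed
    hence "poly (map_poly emb a) \<beta> = 0 \<or> poly (map_poly emb b) \<beta> = 0" by simp
    thus "a dvd 1 \<or> b dvd 1"
    proof
      assume "poly (map_poly emb a) \<beta> = 0"
      hence "degree b = 0" using rootdeg[OF a0] dsum by simp
      thus ?thesis using is_unit_iff_degree[OF b0'] by simp
    next
      assume "poly (map_poly emb b) \<beta> = 0"
      hence "degree a = 0" using rootdeg[OF b0'] dsum by simp
      thus ?thesis using is_unit_iff_degree[OF a0] by simp
    qed
  qed
  have refl_map: "reflect_poly (map_poly emb g) = map_poly emb (reflect_poly g)"
    by (rule poly_eqI) (simp add: coeff_reflect_poly)
  have Xm: "map_poly emb (Polynomial.smult (inverse (Polynomial.coeff g 0)) (reflect_poly g))
        = Polynomial.smult (inverse (Polynomial.coeff G 0)) (reflect_poly G)"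
    unfolding mg[symmetric] refl_map by (simp add: e.map_poly_hom_smult e.hom_inverse)
  have Ym: "map_poly emb (map_poly (\<lambda>c. c^q) Z) = map_poly (\<lambda>c. c^q) (map_poly emb Z)" for Z
    using q2 by (intro poly_eqI) (simp add: coeff_map_poly power_0_left e.hom_power)
  have RG: "Polynomial.smult (inverse (Polynomial.coeff G 0)) (reflect_poly G) = (\<Prod>x\<in>S. [:- inverse x, 1:])"
  proof -
    have "reflect_poly G = (\<Prod>x\<in>S. [:1, -x:])"
      unfolding G_def reflect_poly_prod by (simp add: reflect_linear)
    also have "\<dots> = (\<Prod>x\<in>S. Polynomial.smult (-x) [:- inverse x, 1:])"
      by (rule prod.cong) (use S_nz in auto)
    also have "\<dots> = Polynomial.smult (Polynomial.coeff G 0) (\<Prod>x\<in>S. [:- inverse x, 1:])"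
      unfolding prod_smult cG0 ..
    finally show ?thesis using cG0nz by simp
  qed
  have cr: "conj_recip q g = g"
  proof -
    have "map_poly emb (conj_recip q g) = map_poly (\<lambda>c. c^q) (\<Prod>x\<in>S. [:- inverse x, 1:])"
      unfolding conj_recip_def conj_poly_def recip_poly_def Ym Xm RG ..
    also have "\<dots> = (\<Prod>x\<in>S. [:- h x, 1:])"
      unfolding h_def by (simp add: mfq.hom_prod hom_distribs)
    also have "\<dots> = (\<Prod>y\<in>h ` S. [:-y,1:])"
      by (rule prod.reindex[symmetric, unfolded comp_def]) (rule inj_on_subset[OF inj_h], simp)
    also have "\<dots> = map_poly emb g" unfolding S_h G_def mg ..
    finally show ?thesis by simp
  qed
  have mono_map: "map_poly emb (Polynomial.monom 1 s - 1) = Polynomial.monom 1 s - 1" for s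
    by (simp add: hom_distribs)
  have dvd_iff: "g dvd (Polynomial.monom 1 s - 1) \<longleftrightarrow> G dvd (Polynomial.monom 1 s - 1)" for s
  proof
    assume "g dvd (Polynomial.monom 1 s - 1)"
    hence "map_poly emb g dvd map_poly emb (Polynomial.monom 1 s - 1)" by (rule me.hom_dvd)
    thus "G dvd (Polynomial.monom 1 s - 1)" using mg mono_map by simp
  next
    assume "G dvd (Polynomial.monom 1 s - 1)"
    hence "map_poly emb g dvd map_poly emb (Polynomial.monom 1 s - 1)" using mg mono_map by simp
    thus "g dvd (Polynomial.monom 1 s - 1)" by (rule e.dvd_map_poly_hom_imp_dvd)
  qed
  have Gdvd1: "d dvd s" if "G dvd (Polynomial.monom 1 s - 1)" for s
  proof -
    have "poly (Polynomial.monom 1 s - 1) \<beta> = 0"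
      using that rootG[OF bS] by (metis dvd_def mult_eq_0_iff poly_mult)
    hence "\<beta> ^ s = 1" by (simp add: poly_monom)
    thus ?thesis using prim_pow_eq1[OF assms(11)] by simp
  qed
  have Gdvd2: "G dvd (Polynomial.monom 1 d - 1)"
    unfolding G_def
  proof (rule prod_linear_dvd[OF finS], rule ballI)
    fix x assume "x \<in> S"
    then obtain i where x: "x = r i" unfolding S_def by auto
    have "x ^ d = (\<beta> ^ d) ^ (Q ^ i)" unfolding x r_def by (simp flip: power_mult add: mult.commute)
    also have "\<beta> ^ d = 1" using assms(11) by (simp add: primitive_root_def)
    finally show "poly (Polynomial.monom 1 d - 1) x = 0" by (simp add: poly_monom)
  qed
  have ord: "poly_ord g = d"
    unfolding poly_ord_def
  proof (rule Least_equality)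
    show "0 < d \<and> g dvd Polynomial.monom 1 d - 1" using d0 Gdvd2 dvd_iff by simp
    fix y assume "0 < y \<and> g dvd Polynomial.monom 1 y - 1"
    thus "d \<le> y" using dvd_iff Gdvd1 dvd_imp_le by blast
  qed
  show ?thesis
    by (rule exI[of _ g]) (use mg Geq cr irr lcg cg0 degg ord in \<open>simp add: SCRIM_def\<close>)
qed
end
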